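(* Let $m_1,m_2\geq 1$, $m=m_1+m_2$, $j=\mathrm{diag}(I_{m_1},-I_{m_2})$, and let $\{C_k\}_{k\geq 0}$ be a sequence of $m\times m$ matrices with $C_k>0$ and $C_kjC_k=j$ for all $k\geq 0$. Then the discrete Dirac system $y_{k+1}(z)=(I_m+\mathrm{i} z jC_k)y_k(z)$ $(k\geq 0)$ has a unique Weyl function $\varphi$, and this Weyl function is analytic and contractive (i.e. $\varphi(z)^*\varphi(z)\leq I_{m_2}$) on the open lower half-plane $\mathbb{C}_-$.
   Context: The fundamental solution $\{W_k(z)\}$ of the system is defined by $W_0(z)=I_m$, $W_{k+1}(z)=(I_m+\mathrm{i} z jC_k)W_k(z)$. Put $q(z)=(1+|z|^2)^{-1}$. A Weyl function of the system is an $m_1\times m_2$ matrix function $\varphi$ on $\mathbb{C}_-$ such that for every $z\in\mathbb{C}_-$ the series $\sum_{k=0}^\infty q(z)^k\begin{bmatrix}\varphi(z)^* & I_{m_2}\end{bmatrix}W_k(z)^*C_kW_k(z)\begin{bmatrix}\varphi(z)\\ I_{m_2}\end{bmatrix}$ is finite (converges). *)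

theory Defs
  imports "HOL-Analysis.Analysis"
begin

text \<open>Block index type: rows/columns of an m x m matrix with m = m1 + m2 are indexed by
  'a + 'b, where CARD('a) = m1 and CARD('b) = m2 (both automatically at least 1).\<close>

definition adj :: "complex ^ 'n ^ 'm \<Rightarrow> complex ^ 'm ^ 'n" where
  "adj A = (\<chi> i j. cnj (A $ j $ i))"

definition hermitian :: "complex ^ 'n ^ 'n \<Rightarrow> bool" where
  "hermitian A \<longleftrightarrow> adj A = A"

definition qform :: "complex ^ 'n ^ 'n \<Rightarrow> complex ^ 'n \<Rightarrow> complex" where
  "qform A x = (\<Sum>i\<in>UNIV. cnj (x $ i) * (A *v x) $ i)"

definition pos_def :: "complex ^ 'n ^ 'n \<Rightarrow> bool" where
  "pos_def A \<longleftrightarrow> hermitian A \<and> (\<forall>x. x \<noteq> 0 \<longrightarrow> Re (qform A x) > 0)"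

definition pos_semidef :: "complex ^ 'n ^ 'n \<Rightarrow> bool" where
  "pos_semidef A \<longleftrightarrow> hermitian A \<and> (\<forall>x. Re (qform A x) \<ge> 0)"

definition loewner_le :: "complex ^ 'n ^ 'n \<Rightarrow> complex ^ 'n ^ 'n \<Rightarrow> bool" where
  "loewner_le A B \<longleftrightarrow> pos_semidef (B - A)"

definition jmat :: "complex ^ ('a::finite + 'b::finite) ^ ('a + 'b)" where
  "jmat = (\<chi> r s. if r = s then (case r of Inl _ \<Rightarrow> 1 | Inr _ \<Rightarrow> -1) else 0)"

primrec W :: "(nat \<Rightarrow> complex ^ ('a::finite + 'b::finite) ^ ('a + 'b)) \<Rightarrow> complex \<Rightarrow> nat
               \<Rightarrow> complex ^ ('a + 'b) ^ ('a + 'b)" where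
  "W C z 0 = mat 1"
| "W C z (Suc k) = (mat 1 + mat (\<i> * z) ** jmat ** C k) ** W C z k"

definition q :: "complex \<Rightarrow> real" where
  "q z = 1 / (1 + (cmod z)\<^sup>2)"

definition lower_half_plane :: "complex set" where
  "lower_half_plane = {z. Im z < 0}"

definition stack_id :: "complex ^ 'b ^ 'a \<Rightarrow> complex ^ 'b ^ ('a::finite + 'b::finite)" where
  "stack_id P = (\<chi> r c. case r of Inl i \<Rightarrow> P $ i $ c | Inr i \<Rightarrow> (if i = c then 1 else 0))"

definition is_weyl :: "(nat \<Rightarrow> complex ^ ('a::finite + 'b::finite) ^ ('a + 'b))
                        \<Rightarrow> (complex \<Rightarrow> complex ^ 'b ^ 'a) \<Rightarrow> bool" where
  "is_weyl C \<phi> \<longleftrightarrow> (\<forall>z \<in> lower_half_plane.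
     summable (\<lambda>k. (q z) ^ k *\<^sub>R
        (adj (stack_id (\<phi> z)) ** adj (W C z k) ** C k ** W C z k ** stack_id (\<phi> z))))"

end

theory Submission
  imports Defs "HOL-Complex_Analysis.Cauchy_Integral_Formula"
begin

lemma sum_UNIV_plus:
  "(\<Sum>i\<in>(UNIV::('a::finite+'b::finite) set). f i) = (\<Sum>a\<in>UNIV. f (Inl a)) + (\<Sum>b\<in>UNIV. f (Inr b))"
  by (metis (no_types, lifting) UNIV_Plus_UNIV finite sum.Plus comp_apply sum.cong)

definition cinner :: "complex^'n \<Rightarrow> complex^'n \<Rightarrow> complex" where
  "cinner x y = (\<Sum>i\<in>UNIV. cnj (x$i) * y$i)"

lemma cinner_add_right: "cinner x (y + w) = cinner x y + cinner x w"
  by (simp add: cinner_def distrib_left sum.distrib)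
lemma cinner_add_left: "cinner (y + w) x = cinner y x + cinner w x"
  by (simp add: cinner_def distrib_right sum.distrib)
lemma cinner_diff_right: "cinner x (y - w) = cinner x y - cinner x w"
  by (simp add: cinner_def right_diff_distrib sum_subtractf)
lemma cinner_diff_left: "cinner (y - w) x = cinner y x - cinner w x"
  by (simp add: cinner_def left_diff_distrib sum_subtractf)
lemma cinner_scale_right: "cinner x (c *s y) = c * cinner x y"
  by (simp add: cinner_def sum_distrib_left mult_ac)
lemma cinner_scale_left: "cinner (c *s x) y = cnj c * cinner x y"
  by (simp add: cinner_def sum_distrib_left mult_ac)
lemma cinner_commute: "cinner y x = cnj (cinner x y)"
  by (simp add: cinner_def mult_ac)
lemma cinner_zero_right[simp]: "cinner x 0 = 0"
  by (simp add: cinner_def)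
lemma cinner_zero_left[simp]: "cinner 0 x = 0"
  by (simp add: cinner_def)

lemma cinner_adj: "cinner x (A *v y) = cinner (adj A *v x) y"
proof -
  have "cinner x (A *v y) = (\<Sum>i\<in>UNIV. \<Sum>j\<in>UNIV. cnj (x$i) * A$i$j * y$j)"
    by (simp add: cinner_def matrix_vector_mult_def sum_distrib_left mult_ac)
  also have "\<dots> = (\<Sum>j\<in>UNIV. \<Sum>i\<in>UNIV. cnj (x$i) * A$i$j * y$j)"
    by (rule sum.swap)
  also have "\<dots> = cinner (adj A *v x) y"
    by (simp add: cinner_def matrix_vector_mult_def adj_def sum_distrib_right sum_distrib_left mult_ac)
  finally show ?thesis .
qed

lemma adj_adj[simp]: "adj (adj A) = A"
  by (simp add: adj_def vec_eq_iff)

lemma cinner_adj': "cinner (A *v x) y = cinner x (adj A *v y)"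
  by (metis adj_adj cinner_adj)

lemma hermitian_cinner: "hermitian A \<Longrightarrow> cinner x (A *v y) = cinner (A *v x) y"
  by (simp add: hermitian_def cinner_adj)

lemma hermitian_real: "hermitian A \<Longrightarrow> cnj (cinner x (A *v x)) = cinner x (A *v x)"
  by (metis cinner_commute hermitian_cinner)

lemma qform_cinner: "qform A x = cinner x (A *v x)"
  by (simp add: qform_def cinner_def)

lemma cnj_mult_self: "cnj z * z = complex_of_real ((cmod z)^2)"
  by (metis complex_norm_square mult.commute of_real_power)

definition nsq :: "complex^'n \<Rightarrow> real" where
  "nsq x = (\<Sum>i\<in>UNIV. (cmod (x$i))^2)"

lemma cinner_self: "cinner x x = of_real (nsq x)"
  unfolding cinner_def nsq_def of_real_sum
  by (rule sum.cong) (simp_all add: cnj_mult_self)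

lemma nsq_nonneg: "nsq x \<ge> 0"
  by (simp add: nsq_def sum_nonneg)

lemma nsq_zero: "nsq x = 0 \<longleftrightarrow> x = 0"
  by (simp add: nsq_def sum_nonneg_eq_0_iff vec_eq_iff)

lemma mat_scal_vec: "mat c *v v = c *s v"
  by (simp add: matrix_vector_mult_def mat_def vec_eq_iff if_distrib if_distribR sum.delta cong: if_cong)

lemma jmat_entry: "jmat $ r $ s = (if r = s then (case r of Inl _ \<Rightarrow> 1 | Inr _ \<Rightarrow> -1) else 0)"
  by (simp add: jmat_def)

lemma jmat_vec: "(jmat *v x) $ i = (case i of Inl a \<Rightarrow> x $ i | Inr b \<Rightarrow> - x $ i)"
proof -
  have "(jmat *v x) $ i = (\<Sum>s\<in>UNIV. (if i = s then (case i of Inl _ \<Rightarrow> 1 | Inr _ \<Rightarrow> -1) * x $ i else 0))"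
    unfolding matrix_vector_mult_def vec_lambda_beta by (rule sum.cong) (auto simp: jmat_entry)
  also have "\<dots> = (case i of Inl _ \<Rightarrow> 1 | Inr _ \<Rightarrow> -1) * x $ i"
    by simp
  finally show ?thesis by (simp split: sum.split)
qed

lemma jmat_jmat: "jmat ** jmat = mat 1"
proof -
  have "(jmat ** jmat) $ r $ s = mat 1 $ r $ s" for r s
  proof -
    have "(jmat ** jmat) $ r $ s = (\<Sum>k\<in>UNIV. jmat $ r $ k * jmat $ k $ s)"
      by (simp add: matrix_matrix_mult_def)
    also have "\<dots> = (\<Sum>k\<in>UNIV. if k = r then jmat $ r $ r * jmat $ r $ s else 0)"
      by (rule sum.cong) (auto simp: jmat_entry)
    also have "\<dots> = mat 1 $ r $ s"
      by (simp add: jmat_entry mat_def split: sum.split)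
    finally show ?thesis .
  qed
  then show ?thesis by (simp only: vec_eq_iff) blast
qed

lemma jmat_herm: "hermitian jmat"
  by (simp add: hermitian_def adj_def vec_eq_iff jmat_entry split: sum.split)

lemma jj_vec: "jmat *v (jmat *v x) = x"
  by (simp add: matrix_vector_mul_assoc jmat_jmat)
definition Jf :: "complex^('a::finite+'b::finite) \<Rightarrow> real" where
  "Jf x = Re (cinner x (jmat *v x))"

lemma Jf_formula: "Jf x = (\<Sum>a\<in>UNIV. (cmod (x$Inl a))^2) - (\<Sum>b\<in>UNIV. (cmod (x$Inr b))^2)"
proof -
  have "cinner x (jmat *v x) = (\<Sum>a\<in>UNIV. cnj (x$Inl a) * x$Inl a) + (\<Sum>b\<in>UNIV. - (cnj (x$Inr b) * x$Inr b))"
    by (simp add: cinner_def sum_UNIV_plus jmat_vec)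
  also have "\<dots> = of_real ((\<Sum>a\<in>UNIV. (cmod (x$Inl a))^2) - (\<Sum>b\<in>UNIV. (cmod (x$Inr b))^2))"
    by (simp only: cnj_mult_self of_real_sum of_real_diff sum_negf) simp
  finally show ?thesis
    by (simp add: Jf_def)
qed

lemma step_vec: "(mat 1 + mat c ** jmat ** M) *v x = x + c *s (jmat *v (M *v x))"
  by (simp add: matrix_vector_mult_add_rdistrib mat_scal_vec flip: matrix_vector_mul_assoc)

lemma herm_swap: "hermitian A \<Longrightarrow> cinner (A *v x) y = cinner x (A *v y)"
  by (simp add: hermitian_cinner)

lemma real_of_herm: "hermitian A \<Longrightarrow> Im (cinner x (A *v x)) = 0"
proof -
  assume "hermitian A"
  then have "cnj (cinner x (A *v x)) = cinner x (A *v x)" by (rule hermitian_real)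
  then have "Im (cnj (cinner x (A *v x))) = Im (cinner x (A *v x))" by simp
  then show ?thesis by simp
qed

lemma main_identity:
  fixes M :: "complex^('a::finite+'b::finite)^('a+'b)"
  assumes hM: "hermitian M" and MjM: "M ** jmat ** M = jmat"
  shows "Jf ((mat 1 + mat (\<i>*w) ** jmat ** M) *v x) = (1 + (cmod w)^2) * Jf x - 2 * Im w * Re (cinner x (M *v x))"
proof -
  define u where "u = jmat *v (M *v x)"
  define c where "c = \<i> * w"
  define a where "a = cinner x (M *v x)"
  define A where "A = cinner x (jmat *v x)"
  have y: "(mat 1 + mat c ** jmat ** M) *v x = x + c *s u" by (simp add: step_vec u_def)
  have ju: "jmat *v u = M *v x" by (simp add: u_def jj_vec)
  have ima: "Im a = 0" unfolding a_def using hM by (rule real_of_herm)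
  have real: "cnj a = a" unfolding a_def using hM by (rule hermitian_real)
  have e1: "cinner u (jmat *v x) = a"
  proof -
    have "cinner u (jmat *v x) = cinner (M *v x) (jmat *v (jmat *v x))"
      unfolding u_def by (rule herm_swap[OF jmat_herm])
    also have "\<dots> = cinner (M *v x) x" by (simp add: jj_vec)
    also have "\<dots> = cnj a" unfolding a_def by (rule cinner_commute)
    finally show ?thesis using real by simp
  qed
  have e2: "cinner u (jmat *v u) = A"
  proof -
    have "cinner u (jmat *v u) = cinner u (M *v x)" by (simp add: ju)
    also have "\<dots> = cinner (M *v x) (jmat *v (M *v x))"
      unfolding u_def by (rule herm_swap[OF jmat_herm])
    also have "\<dots> = cinner x (M *v (jmat *v (M *v x)))" by (rule herm_swap[OF hM])
    also have "\<dots> = A" by (simp add: A_def matrix_vector_mul_assoc matrix_mul_assoc MjM)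
    finally show ?thesis .
  qed
  have e0: "cinner x (jmat *v u) = a" by (simp add: ju a_def)
  have "cinner (x + c *s u) (jmat *v (x + c *s u)) = A + c * a + cnj c * a + cnj c * c * A"
    by (simp add: matrix_vector_right_distrib vector_scalar_commute cinner_add_left cinner_add_right
        cinner_scale_left cinner_scale_right e0 e1 e2 A_def algebra_simps)
  also have "\<dots> = A + (c + cnj c) * a + of_real ((cmod c)^2) * A"
    using cnj_mult_self[of c] by (simp add: algebra_simps)
  finally have "cinner (x + c *s u) (jmat *v (x + c *s u)) = A + of_real (- 2 * Im w) * a + of_real ((cmod w)^2) * A"
  proof -
    have "\<i> * w - \<i> * cnj w = - 2 * of_real (Im w)" by (simp add: complex_eq_iff)
    then show "cinner (x + c *s u) (jmat *v (x + c *s u)) = A + (c + cnj c) * a + of_real ((cmod c)^2) * A \<Longrightarrow> ?thesis"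
      by (simp add: c_def norm_mult)
  qed
  then have "Jf ((mat 1 + mat c ** jmat ** M) *v x) = Re A + (- 2 * Im w) * Re a + (cmod w)^2 * Re A"
    by (simp add: Jf_def y)
  then show ?thesis by (simp add: c_def Jf_def A_def a_def algebra_simps)
qed

lemma pos_def_nonneg: "pos_def M \<Longrightarrow> Re (cinner x (M *v x)) \<ge> 0"
  by (cases "x = 0") (auto simp: pos_def_def qform_cinner less_imp_le)

lemma C_ge_j:
  fixes M :: "complex^('a::finite+'b::finite)^('a+'b)"
  assumes pM: "pos_def M" and MjM: "M ** jmat ** M = jmat"
  shows "Jf x \<le> Re (cinner x (M *v x))"
proof -
  have hM: "hermitian M" using pM by (simp add: pos_def_def)
  define v where "v = x - jmat *v (M *v x)"
  define a where "a = cinner x (M *v x)"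
  define A where "A = cinner x (jmat *v x)"
  have real: "cnj a = a" unfolding a_def using hM by (rule hermitian_real)
  have t1: "cinner x (M *v (jmat *v (M *v x))) = A" by (simp add: A_def matrix_vector_mul_assoc matrix_mul_assoc MjM)
  have t2: "cinner (jmat *v (M *v x)) (M *v x) = A"
    using herm_swap[OF jmat_herm, of "M *v x" "M *v x"] herm_swap[OF hM, of x "jmat *v (M *v x)"] t1 by simp
  have t3: "cinner (jmat *v (M *v x)) (M *v (jmat *v (M *v x))) = a"
  proof -
    have "cinner (jmat *v (M *v x)) (M *v (jmat *v (M *v x))) = cinner (jmat *v (M *v x)) (jmat *v x)"
      by (simp add: matrix_vector_mul_assoc matrix_mul_assoc MjM)
    also have "\<dots> = cinner (M *v x) x" using herm_swap[OF jmat_herm, of "M *v x" "jmat *v x"] by (simp add: jj_vec)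
    also have "\<dots> = cnj a" unfolding a_def by (rule cinner_commute)
    finally show ?thesis using real by simp
  qed
  have "cinner v (M *v v) = 2 * a - 2 * A"
    by (simp add: v_def matrix_vector_mult_diff_distrib cinner_diff_left cinner_diff_right t1 t2 t3 a_def[symmetric])
  moreover have "Re (cinner v (M *v v)) \<ge> 0" using pM by (rule pos_def_nonneg)
  ultimately show ?thesis by (simp add: Jf_def A_def a_def)
qed

lemma cinner_parallel: "cinner (a + b) (M *v (a + b)) + cinner (a - b) (M *v (a - b)) = 2 * cinner a (M *v a) + 2 * cinner b (M *v b)"
  by (simp add: matrix_vector_right_distrib matrix_vector_mult_diff_distrib cinner_add_left cinner_add_right cinner_diff_left cinner_diff_right algebra_simps)

lemma qform_scaleR: "qform (r *\<^sub>R M) v = of_real r * qform M v"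
  unfolding qform_def matrix_vector_mult_def vec_lambda_beta vector_scaleR_component
  by (simp add: scaleR_conv_of_real sum_distrib_left algebra_simps)

lemma qform_sandwich: "qform (adj X ** adj V ** M ** V ** X) v = cinner (V *v (X *v v)) (M *v (V *v (X *v v)))"
  by (simp add: qform_cinner cinner_adj' flip: matrix_vector_mul_assoc)

locale dirac =
  fixes C :: "nat \<Rightarrow> complex ^ ('a::finite + 'b::finite) ^ ('a + 'b)"
  assumes posC: "\<And>k. pos_def (C k)"
    and CjC: "\<And>k. C k ** jmat ** C k = jmat"
begin

lemma hermC: "hermitian (C k)" using posC[of k] by (simp add: pos_def_def)

definition fJ :: "complex \<Rightarrow> nat \<Rightarrow> complex^('a+'b) \<Rightarrow> real" where
  "fJ z n x = q z ^ n * Jf (W C z n *v x)"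

definition sC :: "complex \<Rightarrow> nat \<Rightarrow> complex^('a+'b) \<Rightarrow> real" where
  "sC z n x = q z ^ n * Re (cinner (W C z n *v x) (C n *v (W C z n *v x)))"

definition cc :: "complex \<Rightarrow> real" where
  "cc z = 1 - 2 * Im z * q z"

lemma q_pos: "q z > 0"
  unfolding q_def by (simp add: add_pos_nonneg)

lemma q_mult: "q z * (1 + (cmod z)^2) = 1"
proof -
  have "1 + (cmod z)^2 > 0" by (simp add: add_pos_nonneg)
  then show ?thesis unfolding q_def by simp
qed

lemma sC_nonneg: "sC z n x \<ge> 0"
  unfolding sC_def using q_pos[of z] pos_def_nonneg[OF posC] by simp

lemma fJ_0: "fJ z 0 x = Jf x"
  by (simp add: fJ_def)

lemma fJ_step: "fJ z (Suc n) x = fJ z n x - 2 * Im z * q z * sC z n x"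
proof -
  have ws: "W C z (Suc n) *v x = (mat 1 + mat (\<i>*z) ** jmat ** C n) *v (W C z n *v x)"
    by (simp add: matrix_vector_mul_assoc)
  define J0 where "J0 = Jf (W C z n *v x)"
  define R0 where "R0 = Re (cinner (W C z n *v x) (C n *v (W C z n *v x)))"
  have "Jf (W C z (Suc n) *v x) = (1 + (cmod z)^2) * J0 - 2 * Im z * R0"
    unfolding ws J0_def R0_def by (rule main_identity[OF hermC CjC])
  then have "fJ z (Suc n) x = q z * q z ^ n * ((1 + (cmod z)^2) * J0 - 2 * Im z * R0)"
    by (simp only: fJ_def power_Suc)
  also have "\<dots> = q z ^ n * (q z * (1 + (cmod z)^2)) * J0 - 2 * Im z * q z * (q z ^ n * R0)"
    by (simp add: algebra_simps)
  finally show ?thesis by (simp add: q_mult fJ_def sC_def J0_def R0_def)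
qed

lemma sC_ge_fJ: "fJ z n x \<le> sC z n x"
  unfolding fJ_def sC_def using q_pos[of z] C_ge_j[OF posC CjC]
  by (simp add: mult_left_mono)

lemma fJ_mono_step: "Im z \<le> 0 \<Longrightarrow> fJ z n x \<le> fJ z (Suc n) x"
  using sC_nonneg[of z n x] q_pos[of z] by (simp add: fJ_step mult_nonpos_nonneg mult_nonneg_nonneg)

lemma fJ_mono: assumes "Im z \<le> 0" "k \<le> n" shows "fJ z k x \<le> fJ z n x"
  using assms(2)
proof (induction n rule: dec_induct)
  case base then show ?case by simp
next
  case (step m) then show ?case using fJ_mono_step[OF assms(1), of m x] by linarith
qed

lemma fJ_growth: "Im z \<le> 0 \<Longrightarrow> fJ z n x \<ge> cc z ^ n * Jf x"
proof (induction n)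
  case 0 then show ?case by (simp add: fJ_0)
next
  case (Suc n)
  have "Im z * q z \<le> 0" using Suc.prems q_pos[of z] by (simp add: mult_nonpos_nonneg)
  then have cpos: "cc z \<ge> 0" unfolding cc_def by simp
  have "- 2 * Im z * q z * sC z n x \<ge> - 2 * Im z * q z * fJ z n x"
    using Suc.prems q_pos[of z] sC_ge_fJ[of z n x] by (intro mult_left_mono) (auto simp: mult_nonpos_nonneg)
  then have "fJ z (Suc n) x \<ge> cc z * fJ z n x" by (simp add: fJ_step cc_def algebra_simps)
  moreover have "cc z * fJ z n x \<ge> cc z * (cc z ^ n * Jf x)" using Suc cpos by (intro mult_left_mono) auto
  ultimately show ?case by simp
qed

lemma fJ_sum: "fJ z n x = Jf x - 2 * Im z * q z * (\<Sum>k<n. sC z k x)"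
  by (induction n) (simp_all add: fJ_0 fJ_step algebra_simps)

lemma sC_diff: "sC z n (x - y) \<le> 2 * sC z n x + 2 * sC z n y"
proof -
  let ?Q = "\<lambda>v. cinner v (C n *v v)"
  have par: "?Q (W C z n *v x + W C z n *v y) + ?Q (W C z n *v x - W C z n *v y) = 2 * ?Q (W C z n *v x) + 2 * ?Q (W C z n *v y)"
    by (rule cinner_parallel)
  have "Re (?Q (W C z n *v x + W C z n *v y)) \<ge> 0" by (rule pos_def_nonneg[OF posC])
  then have "Re (?Q (W C z n *v x - W C z n *v y)) \<le> 2 * Re (?Q (W C z n *v x)) + 2 * Re (?Q (W C z n *v y))"
    using arg_cong[OF par, of Re] by simp
  then have "q z ^ n * Re (?Q (W C z n *v x - W C z n *v y)) \<le> q z ^ n * (2 * Re (?Q (W C z n *v x)) + 2 * Re (?Q (W C z n *v y)))"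
    by (rule mult_left_mono) (simp add: q_pos less_imp_le)
  then show ?thesis unfolding sC_def by (simp add: matrix_vector_mult_diff_distrib algebra_simps)
qed

lemma summable_qform:
  fixes f :: "nat \<Rightarrow> complex^'n^'n"
  assumes "summable f"
  shows "summable (\<lambda>k. qform (f k) v)"
proof -
  have e: "qform (f k) v = (\<Sum>i\<in>UNIV. \<Sum>j\<in>UNIV. cnj (v$i) * (f k $ i $ j * v$j))" for k
    by (simp add: qform_def matrix_vector_mult_def sum_distrib_left)
  have "summable (\<lambda>k. f k $ i $ j)" for i j
    by (intro summable_vec_nth assms)
  then have "summable (\<lambda>k. (\<Sum>i\<in>UNIV. \<Sum>j\<in>UNIV. cnj (v$i) * (f k $ i $ j * v$j)))"
    by (intro summable_sum summable_mult summable_mult2) auto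
  then show ?thesis by (simp only: e)
qed

definition Tm :: "complex \<Rightarrow> complex^'c^('a+'b) \<Rightarrow> nat \<Rightarrow> complex^'c^'c" where
  "Tm z X k = q z ^ k *\<^sub>R (adj X ** adj (W C z k) ** C k ** W C z k ** X)"

lemma qform_Tm: "qform (Tm z X k) v = of_real (sC z k (X *v v))"
proof -
  have "Im (cinner (W C z k *v (X *v v)) (C k *v (W C z k *v (X *v v)))) = 0"
    by (rule real_of_herm[OF hermC])
  then show ?thesis
    by (simp add: Tm_def qform_scaleR qform_sandwich sC_def complex_eq_iff)
qed

lemma weyl_s_summable:
  assumes "is_weyl C \<psi>" "z \<in> lower_half_plane"
  shows "summable (\<lambda>k. sC z k (stack_id (\<psi> z) *v v))"
proof -
  have "summable (\<lambda>k. Tm z (stack_id (\<psi> z)) k)"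
    using assms unfolding is_weyl_def Tm_def by blast
  then have "summable (\<lambda>k. qform (Tm z (stack_id (\<psi> z)) k) v)"
    by (rule summable_qform)
  then have "summable (\<lambda>k. Re (qform (Tm z (stack_id (\<psi> z)) k) v))"
    by (simp add: summable_complex_iff)
  then show ?thesis by (simp add: qform_Tm)
qed

lemma cc_gt1: "Im z < 0 \<Longrightarrow> cc z > 1"
  using q_pos[of z] by (simp add: cc_def mult_neg_pos)

lemma Jf_le0:
  assumes z: "Im z < 0" and sm: "summable (\<lambda>k. sC z k x)"
  shows "Jf x \<le> 0"
proof (rule ccontr)
  assume "\<not> Jf x \<le> 0"
  then have Jp: "Jf x > 0" by simp
  define S where "S = suminf (\<lambda>k. sC z k x)"
  define B where "B = Jf x + (- 2 * Im z * q z) * S"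
  have cpos: "- 2 * Im z * q z \<ge> 0" using z q_pos[of z] by (simp add: mult_nonpos_nonneg)
  have "fJ z n x \<le> B" for n
  proof -
    have "(\<Sum>k<n. sC z k x) \<le> S" unfolding S_def
      by (rule sum_le_suminf[OF sm]) (auto simp: sC_nonneg)
    then have "(- 2 * Im z * q z) * (\<Sum>k<n. sC z k x) \<le> (- 2 * Im z * q z) * S"
      using cpos by (rule mult_left_mono)
    then show ?thesis by (simp add: fJ_sum B_def)
  qed
  moreover obtain n where "B / Jf x < cc z ^ n" using real_arch_pow[OF cc_gt1[OF z]] by blast
  then have "B < cc z ^ n * Jf x" using Jp by (simp add: divide_less_eq)
  moreover have "cc z ^ n * Jf x \<le> fJ z n x" using z by (intro fJ_growth) simp
  ultimately show False by (smt (verit))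
qed

lemma stack_vec_Inl: "(stack_id P *v v) $ Inl a = (P *v v) $ a"
  by (simp add: stack_id_def matrix_vector_mult_def)

lemma stack_vec_Inr: "(stack_id P *v v) $ Inr b = v $ b"
proof -
  have "(stack_id P *v v) $ Inr b = (\<Sum>c\<in>UNIV. if b = c then v $ c else 0)"
    unfolding stack_id_def matrix_vector_mult_def vec_lambda_beta by (rule sum.cong) auto
  then show ?thesis by simp
qed

lemma Jf_stack: "Jf (stack_id P *v v) = nsq (P *v v) - nsq v"
  by (simp add: Jf_formula stack_vec_Inl stack_vec_Inr nsq_def)

lemma adj_diff: "adj (A - B) = adj A - adj B"
  by (simp add: adj_def vec_eq_iff)
lemma adj_mult: "adj (A ** B) = adj B ** adj A"
  by (simp add: adj_def vec_eq_iff matrix_matrix_mult_def mult.commute)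
lemma adj_mat1: "adj (mat 1) = mat 1"
  by (simp add: adj_def vec_eq_iff mat_def)

lemma contractive_of_J:
  assumes "\<And>v. Jf (stack_id P *v v) \<le> 0"
  shows "loewner_le (adj P ** P) (mat 1)"
  unfolding loewner_le_def pos_semidef_def
proof
  show "hermitian (mat 1 - adj P ** P)"
    by (simp add: hermitian_def adj_diff adj_mult adj_mat1)
  show "\<forall>x. 0 \<le> Re (qform (mat 1 - adj P ** P) x)"
  proof
    fix x
    have "qform (mat 1 - adj P ** P) x = cinner x x - cinner (P *v x) (P *v x)"
      by (simp add: qform_cinner matrix_vector_mult_diff_rdistrib cinner_diff_right cinner_adj'
          flip: matrix_vector_mul_assoc)
    then have "Re (qform (mat 1 - adj P ** P) x) = nsq x - nsq (P *v x)"
      by (simp add: cinner_self)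
    then show "0 \<le> Re (qform (mat 1 - adj P ** P) x)"
      using assms[of x] by (simp add: Jf_stack)
  qed
qed

lemma weyl_contractive:
  assumes "is_weyl C \<psi>" "z \<in> lower_half_plane"
  shows "loewner_le (adj (\<psi> z) ** \<psi> z) (mat 1)"
  using assms Jf_le0 weyl_s_summable contractive_of_J
  by (metis lower_half_plane_def mem_Collect_eq)

lemma weyl_unique:
  assumes w1: "is_weyl C \<phi>" and w2: "is_weyl C \<psi>" and z: "z \<in> lower_half_plane"
  shows "\<psi> z = \<phi> z"
proof -
  have zi: "Im z < 0" using z by (simp add: lower_half_plane_def)
  have "\<phi> z *v v = \<psi> z *v v" for v
  proof -
    define d where "d = stack_id (\<phi> z) *v v - stack_id (\<psi> z) *v v"
    have s1: "summable (\<lambda>k. sC z k (stack_id (\<phi> z) *v v))" by (rule weyl_s_summable[OF w1 z])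
    have s2: "summable (\<lambda>k. sC z k (stack_id (\<psi> z) *v v))" by (rule weyl_s_summable[OF w2 z])
    have "summable (\<lambda>k. sC z k d)"
    proof (rule summable_comparison_test)
      show "\<exists>N. \<forall>n\<ge>N. norm (sC z n d) \<le> 2 * sC z n (stack_id (\<phi> z) *v v) + 2 * sC z n (stack_id (\<psi> z) *v v)"
        using sC_diff sC_nonneg unfolding d_def by auto
      show "summable (\<lambda>n. 2 * sC z n (stack_id (\<phi> z) *v v) + 2 * sC z n (stack_id (\<psi> z) *v v))"
        using s1 s2 by (intro summable_add summable_mult) auto
    qed
    then have J: "Jf d \<le> 0" by (rule Jf_le0[OF zi])
    have "Jf d = (\<Sum>a\<in>UNIV. (cmod ((\<phi> z *v v) $ a - (\<psi> z *v v) $ a))^2)"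
      by (simp add: Jf_formula d_def stack_vec_Inl stack_vec_Inr)
    with J have "(\<Sum>a\<in>UNIV. (cmod ((\<phi> z *v v) $ a - (\<psi> z *v v) $ a))^2) = 0"
      by (simp add: antisym sum_nonneg)
    then have "\<forall>a. (cmod ((\<phi> z *v v) $ a - (\<psi> z *v v) $ a))^2 = 0"
      by (simp add: sum_nonneg_eq_0_iff)
    then show ?thesis by (simp add: vec_eq_iff)
  qed
  then show ?thesis by (simp add: matrix_eq)
qed


definition in_disc :: "complex \<Rightarrow> nat \<Rightarrow> complex^'b^'a \<Rightarrow> bool" where
  "in_disc z n P \<longleftrightarrow> (\<forall>v. fJ z n (stack_id P *v v) \<le> 0)"

lemma in_disc_mono: "Im z \<le> 0 \<Longrightarrow> k \<le> n \<Longrightarrow> in_disc z n P \<Longrightarrow> in_disc z k P"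
  unfolding in_disc_def using fJ_mono by (meson order_trans)

lemma nsq_diff_le: "nsq (P *v v) \<le> nsq v \<Longrightarrow> True" by simp

lemma disc_sum_bound:
  assumes z: "Im z < 0" and d: "in_disc z n P"
  shows "(- 2 * Im z * q z) * (\<Sum>k<n. sC z k (stack_id P *v v)) \<le> nsq v"
proof -
  have "fJ z n (stack_id P *v v) \<le> 0" using d by (simp add: in_disc_def)
  then have "(- 2 * Im z * q z) * (\<Sum>k<n. sC z k (stack_id P *v v)) \<le> nsq v - nsq (P *v v)"
    by (simp add: fJ_sum Jf_stack)
  then show ?thesis using nsq_nonneg[of "P *v v"] by linarith
qed

lemma disc_close:
  assumes z: "Im z < 0" and d1: "in_disc z n P1" and d2: "in_disc z n P2"
  shows "(cc z ^ n - 1) * nsq ((P1 - P2) *v v) \<le> 4 * nsq v"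
proof -
  define g where "g = - 2 * Im z * q z"
  have gpos: "g \<ge> 0" unfolding g_def using z q_pos[of z] by (simp add: mult_nonpos_nonneg)
  define x1 where "x1 = stack_id P1 *v v"
  define x2 where "x2 = stack_id P2 *v v"
  have b1: "g * (\<Sum>k<n. sC z k x1) \<le> nsq v" unfolding g_def x1_def by (rule disc_sum_bound[OF z d1])
  have b2: "g * (\<Sum>k<n. sC z k x2) \<le> nsq v" unfolding g_def x2_def by (rule disc_sum_bound[OF z d2])
  have "(\<Sum>k<n. sC z k (x1 - x2)) \<le> (\<Sum>k<n. 2 * sC z k x1 + 2 * sC z k x2)"
    by (rule sum_mono) (rule sC_diff)
  also have "\<dots> = 2 * (\<Sum>k<n. sC z k x1) + 2 * (\<Sum>k<n. sC z k x2)"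
    by (simp add: sum.distrib sum_distrib_left)
  finally have "g * (\<Sum>k<n. sC z k (x1 - x2)) \<le> g * (2 * (\<Sum>k<n. sC z k x1) + 2 * (\<Sum>k<n. sC z k x2))"
    using gpos by (rule mult_left_mono)
  with b1 b2 have sb: "g * (\<Sum>k<n. sC z k (x1 - x2)) \<le> 4 * nsq v"
    by (simp add: algebra_simps)
  have Jd: "Jf (x1 - x2) = nsq ((P1 - P2) *v v)"
    by (simp add: Jf_formula x1_def x2_def stack_vec_Inl stack_vec_Inr nsq_def matrix_vector_mult_diff_rdistrib)
  have "fJ z n (x1 - x2) \<le> nsq ((P1 - P2) *v v) + 4 * nsq v"
    using sb by (simp add: fJ_sum Jd g_def)
  moreover have "cc z ^ n * nsq ((P1 - P2) *v v) \<le> fJ z n (x1 - x2)"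
    using fJ_growth[of z n "x1 - x2"] z Jd by simp
  ultimately show ?thesis by (simp add: algebra_simps)
qed

lemma entry_le_nsq: "(cmod (M $ a $ b))^2 \<le> nsq (M *v axis b 1)"
proof -
  have e: "(M *v axis b 1) $ a = M $ a $ b"
  proof -
    have "(M *v axis b 1) $ a = (\<Sum>c\<in>UNIV. if c = b then M $ a $ b else 0)"
      unfolding matrix_vector_mult_def vec_lambda_beta axis_def by (rule sum.cong) auto
    then show ?thesis by simp
  qed
  have "(cmod ((M *v axis b 1) $ a))^2 \<le> nsq (M *v axis b 1)"
    unfolding nsq_def by (rule member_le_sum) auto
  then show ?thesis by (simp add: e)
qed

lemma nsq_axis: "nsq (axis b (1::complex)) = 1"
proof -
  have "nsq (axis b (1::complex)) = (\<Sum>c\<in>UNIV. if c = b then 1 else 0)"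
    unfolding nsq_def axis_def by (rule sum.cong) auto
  then show ?thesis by simp
qed

lemma disc_close_entry:
  assumes z: "Im z < 0" and d1: "in_disc z n P1" and d2: "in_disc z n P2"
  shows "(cc z ^ n - 1) * (cmod (P1 $ a $ b - P2 $ a $ b))^2 \<le> 4"
proof -
  have c1: "cc z ^ n - 1 \<ge> 0" using cc_gt1[OF z] by (simp add: one_le_power)
  have "(cc z ^ n - 1) * (cmod ((P1 - P2) $ a $ b))^2 \<le> (cc z ^ n - 1) * nsq ((P1 - P2) *v axis b 1)"
    using entry_le_nsq c1 by (rule mult_left_mono)
  also have "\<dots> \<le> 4" using disc_close[OF z d1 d2, of "axis b 1"] by (simp add: nsq_axis)
  finally show ?thesis by simp
qed


lemma AB_vec:
  fixes M :: "complex^('a::finite+'b::finite)^('a+'b)"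
  assumes MjM: "M ** jmat ** M = jmat"
  shows "(mat 1 + mat c ** jmat ** M) *v ((mat 1 + mat (-c) ** jmat ** M) *v y) = (1 - c^2) *s y"
proof -
  have jj: "jmat *v (M *v (jmat *v (M *v y))) = y"
    by (simp add: matrix_vector_mul_assoc matrix_mul_assoc MjM jmat_jmat)
  define u where "u = jmat *v (M *v y)"
  have By: "(mat 1 + mat (-c) ** jmat ** M) *v y = y - c *s u"
    by (simp add: step_vec u_def vec_eq_iff)
  have "jmat *v (M *v (y - c *s u)) = u - c *s (jmat *v (M *v u))"
    by (simp add: matrix_vector_mult_diff_distrib vector_scalar_commute u_def)
  also have "\<dots> = u - c *s y" by (simp add: u_def jj)
  finally have ju: "jmat *v (M *v (y - c *s u)) = u - c *s y" .
  have "(mat 1 + mat c ** jmat ** M) *v ((mat 1 + mat (-c) ** jmat ** M) *v y) = (mat 1 + mat c ** jmat ** M) *v (y - c *s u)"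
    by (simp only: By)
  also have "\<dots> = (y - c *s u) + c *s (jmat *v (M *v (y - c *s u)))" by (rule step_vec)
  also have "\<dots> = (y - c *s u) + c *s (u - c *s y)" by (simp only: ju)
  finally show ?thesis
    by (simp add: vec_eq_iff power2_eq_square algebra_simps)
qed

lemma Jf_scale: "Jf (c *s x) = (cmod c)^2 * Jf x"
  by (simp add: Jf_formula norm_mult power_mult_distrib sum_distrib_left right_diff_distrib)

primrec V :: "complex \<Rightarrow> nat \<Rightarrow> complex^('a+'b)^('a+'b)" where
  "V z 0 = mat 1"
| "V z (Suc n) = V z n ** (mat 1 + mat (\<i> * (- z)) ** jmat ** C n)"

lemma WV: "W C z n *v (V z n *v x) = (1 + z^2)^n *s x"
proof (induction n arbitrary: x)
  case 0 then show ?case by (simp add: vec_eq_iff)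
next
  case (Suc n)
  have "W C z (Suc n) *v (V z (Suc n) *v x) = (mat 1 + mat (\<i>*z) ** jmat ** C n) *v (W C z n *v (V z n *v ((mat 1 + mat (- (\<i> * z)) ** jmat ** C n) *v x)))"
    by (simp add: matrix_vector_mul_assoc matrix_mul_assoc)
  also have "\<dots> = (mat 1 + mat (\<i>*z) ** jmat ** C n) *v ((1 + z^2)^n *s ((mat 1 + mat (- (\<i> * z)) ** jmat ** C n) *v x))"
    by (simp add: Suc.IH)
  also have "\<dots> = (1 + z^2)^n *s ((1 - (\<i>*z)^2) *s x)"
    by (simp add: vector_scalar_commute AB_vec[OF CjC])
  also have "\<dots> = (1 + z^2)^(Suc n) *s x"
    by (simp add: vec_eq_iff power2_eq_square algebra_simps)
  finally show ?case .
qed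

lemma Jf_V: assumes z: "Im z \<le> 0" shows "Jf (V z n *v x) \<le> (1 + (cmod z)^2)^n * Jf x"
proof (induction n arbitrary: x)
  case 0 then show ?case by simp
next
  case (Suc n)
  define y where "y = (mat 1 + mat (\<i> * (- z)) ** jmat ** C n) *v x"
  have "V z (Suc n) *v x = V z n *v y" by (simp add: y_def matrix_vector_mul_assoc)
  moreover have "Jf y = (1 + (cmod z)^2) * Jf x + 2 * Im z * Re (cinner x (C n *v x))"
    using main_identity[OF hermC CjC, where w = "- z" and x = x] unfolding y_def by simp
  moreover have "2 * Im z * Re (cinner x (C n *v x)) \<le> 0"
    using z pos_def_nonneg[OF posC, of x n] by (simp add: mult_nonpos_nonneg)
  ultimately have "Jf y \<le> (1 + (cmod z)^2) * Jf x" by simp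
  then have "(1 + (cmod z)^2)^n * Jf y \<le> (1 + (cmod z)^2)^n * ((1 + (cmod z)^2) * Jf x)"
    by (rule mult_left_mono) simp
  with Suc.IH[of y] \<open>V z (Suc n) *v x = V z n *v y\<close> show ?case by (simp add: algebra_simps)
qed

definition Ev :: "complex^'b \<Rightarrow> complex^('a+'b)" where
  "Ev u = (\<chi> i. case i of Inl a \<Rightarrow> 0 | Inr b \<Rightarrow> u $ b)"

definition Gm :: "complex \<Rightarrow> nat \<Rightarrow> complex^'b^'b" where
  "Gm z n = (\<chi> b c. V z n $ Inr b $ Inr c)"

definition Fm :: "complex \<Rightarrow> nat \<Rightarrow> complex^'b^'a" where
  "Fm z n = (\<chi> a c. V z n $ Inl a $ Inr c)"

lemma Jf_Ev: "Jf (Ev u) = - nsq u"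
  by (simp add: Jf_formula Ev_def nsq_def)

lemma VEv_Inl: "(V z n *v Ev u) $ Inl a = (Fm z n *v u) $ a"
  by (simp add: matrix_vector_mult_def sum_UNIV_plus Ev_def Fm_def)

lemma VEv_Inr: "(V z n *v Ev u) $ Inr b = (Gm z n *v u) $ b"
  by (simp add: matrix_vector_mult_def sum_UNIV_plus Ev_def Gm_def)

lemma Gm_inj: assumes z: "Im z \<le> 0" shows "inj ((*v) (Gm z n))"
proof -
  have k: "u = 0" if "Gm z n *v u = 0" for u
  proof -
    have "Jf (V z n *v Ev u) = nsq (Fm z n *v u)"
      by (simp add: Jf_formula VEv_Inl VEv_Inr that nsq_def)
    then have "nsq (Fm z n *v u) \<le> (1 + (cmod z)^2)^n * (- nsq u)"
      using Jf_V[OF z, of n "Ev u"] by (simp add: Jf_Ev)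
    then have "(1 + (cmod z)^2)^n * nsq u \<le> 0" using nsq_nonneg[of "Fm z n *v u"] by simp
    moreover have "(1 + (cmod z)^2)^n > 0" by (simp add: add_pos_nonneg)
    ultimately have "nsq u \<le> 0" by (simp add: mult_le_0_iff)
    then show "u = 0" using nsq_nonneg[of u] nsq_zero[of u] by simp
  qed
  show ?thesis
  proof (rule injI)
    fix x y assume "Gm z n *v x = Gm z n *v y"
    then have "Gm z n *v (x - y) = 0" by (simp add: matrix_vector_mult_diff_distrib)
    then have "x - y = 0" by (rule k)
    then show "x = y" by simp
  qed
qed

lemma Gm_inv: assumes z: "Im z \<le> 0" shows "Gm z n ** matrix_inv (Gm z n) = mat 1"
proof -
  have "det (Gm z n) \<noteq> 0"
    using det_nz_iff_inj_gen[OF matrix_vector_mul_linear_gen, of "Gm z n"] Gm_inj[OF z] by simp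
  then have "invertible (Gm z n)" by (simp add: invertible_det_nz)
  then have "\<exists>A'. Gm z n ** A' = mat 1 \<and> A' ** Gm z n = mat 1" by (simp add: invertible_def)
  then show ?thesis unfolding matrix_inv_def by (rule someI2_ex) simp
qed

lemma Gm_det: assumes z: "Im z \<le> 0" shows "det (Gm z n) \<noteq> 0"
  using det_nz_iff_inj_gen[OF matrix_vector_mul_linear_gen, of "Gm z n"] Gm_inj[OF z] by simp

definition phin :: "complex \<Rightarrow> nat \<Rightarrow> complex^'b^'a" where
  "phin z n = Fm z n ** matrix_inv (Gm z n)"

lemma stack_phin: assumes z: "Im z \<le> 0"
  shows "stack_id (phin z n) *v w = V z n *v Ev (matrix_inv (Gm z n) *v w)"
proof -
  have "(stack_id (phin z n) *v w) $ i = (V z n *v Ev (matrix_inv (Gm z n) *v w)) $ i" for i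
  proof (cases i)
    case (Inl a) then show ?thesis
      by (simp add: stack_vec_Inl VEv_Inl phin_def matrix_vector_mul_assoc)
  next
    case (Inr b) then show ?thesis
      by (simp add: stack_vec_Inr VEv_Inr matrix_vector_mul_assoc Gm_inv[OF z])
  qed
  then show ?thesis by (simp add: vec_eq_iff)
qed

lemma phin_disc: assumes z: "Im z \<le> 0" shows "in_disc z n (phin z n)"
  unfolding in_disc_def
proof
  fix w
  have "fJ z n (stack_id (phin z n) *v w) = q z ^ n * ((cmod ((1 + z^2)^n))^2 * (- nsq (matrix_inv (Gm z n) *v w)))"
    by (simp add: fJ_def stack_phin[OF z] WV Jf_scale Jf_Ev)
  also have "\<dots> \<le> 0" using q_pos[of z] nsq_nonneg[of "matrix_inv (Gm z n) *v w"]
    by (simp add: mult_nonneg_nonpos)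
  finally show "fJ z n (stack_id (phin z n) *v w) \<le> 0" .
qed


lemma an_mmult:
  assumes "\<And>i j. (\<lambda>z. A z $ i $ j) analytic_on S" "\<And>i j. (\<lambda>z. B z $ i $ j) analytic_on S"
  shows "(\<lambda>z. (A z ** B z) $ i $ j) analytic_on S"
  unfolding matrix_matrix_mult_def vec_lambda_beta
  by (intro analytic_on_sum analytic_on_mult assms)

lemma an_step: "(\<lambda>z. (mat 1 + mat (\<i> * (- z)) ** jmat ** C n) $ i $ j) analytic_on S"
proof -
  have m: "(\<lambda>z. mat (\<i> * (- z)) $ i $ j) analytic_on S" for i j :: "'a+'b"
    by (cases "i = j") (simp_all add: mat_def analytic_intros)
  have "(\<lambda>z. (mat (\<i> * (- z)) ** jmat ** C n) $ i $ j) analytic_on S"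
    by (intro an_mmult m) simp_all
  then show ?thesis by (simp add: analytic_intros)
qed

lemma an_V: "(\<lambda>z. V z n $ i $ j) analytic_on S"
proof (induction n arbitrary: i j)
  case 0 then show ?case by simp
next
  case (Suc n) then show ?case by (simp only: V.simps) (intro an_mmult an_step)
qed

lemma an_det:
  assumes "\<And>i j. (\<lambda>z. A z $ i $ j) analytic_on S"
  shows "(\<lambda>z. det (A z)) analytic_on S"
  unfolding det_def by (intro analytic_on_sum analytic_on_mult analytic_on_prod analytic_on_const assms)

lemma mv_axis: "(M *v axis b 1) $ a = M $ a $ b"
proof -
  have "(M *v axis b 1) $ a = (\<Sum>c\<in>UNIV. if c = b then M $ a $ b else 0)"
    unfolding matrix_vector_mult_def vec_lambda_beta axis_def by (rule sum.cong) auto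
  then show ?thesis by simp
qed

lemma inv_entry:
  fixes G :: "complex^'n^'n"
  assumes d: "det G \<noteq> 0" and GI: "G ** GI = mat 1"
  shows "GI $ k $ j = det (\<chi> i l. if l = k then axis j 1 $ i else G $ i $ l) / det G"
proof -
  have "G *v (GI *v axis j 1) = axis j 1" by (simp add: matrix_vector_mul_assoc GI)
  then have "GI *v axis j 1 = (\<chi> k. det (\<chi> i l. if l = k then axis j 1 $ i else G $ i $ l) / det G)"
    using cramer[OF d] by blast
  then have "(GI *v axis j 1) $ k = det (\<chi> i l. if l = k then axis j 1 $ i else G $ i $ l) / det G"
    by simp
  then show ?thesis by (simp add: mv_axis)
qed

lemma open_lhp: "open lower_half_plane"
  unfolding lower_half_plane_def by (rule open_halfspace_Im_lt)

lemma an_phin: "(\<lambda>z. phin z n $ a $ b) analytic_on lower_half_plane"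
proof -
  define Q where "Q = (\<lambda>z k j. det (\<chi> i l. if l = k then axis j 1 $ i else Gm z n $ i $ l) / det (Gm z n))"
  have anG: "(\<lambda>z. Gm z n $ i $ j) analytic_on S" for i j S
    by (simp add: Gm_def an_V)
  have anQ: "(\<lambda>z. Q z k j) analytic_on lower_half_plane" for k j
    unfolding Q_def
  proof (rule analytic_on_divide)
    show "(\<lambda>z. det (\<chi> i l. if l = k then axis j 1 $ i else Gm z n $ i $ l)) analytic_on lower_half_plane"
    proof (rule an_det)
      fix i l show "(\<lambda>z. (\<chi> i l. if l = k then axis j 1 $ i else Gm z n $ i $ l) $ i $ l) analytic_on lower_half_plane"
        by (cases "l = k") (simp_all add: anG)
    qed
    show "(\<lambda>z. det (Gm z n)) analytic_on lower_half_plane" by (intro an_det anG)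
    show "\<And>z. z \<in> lower_half_plane \<Longrightarrow> det (Gm z n) \<noteq> 0"
      using Gm_det by (simp add: lower_half_plane_def)
  qed
  have eq: "phin z n $ a $ b = (\<Sum>c\<in>UNIV. Fm z n $ a $ c * Q z c b)" if "z \<in> lower_half_plane" for z
  proof -
    have z: "Im z \<le> 0" using that by (simp add: lower_half_plane_def)
    have "matrix_inv (Gm z n) $ c $ b = Q z c b" for c
      unfolding Q_def by (rule inv_entry[OF Gm_det[OF z] Gm_inv[OF z]])
    then show ?thesis by (simp add: phin_def matrix_matrix_mult_def)
  qed
  have "(\<lambda>z. \<Sum>c\<in>UNIV. Fm z n $ a $ c * Q z c b) holomorphic_on lower_half_plane"
    using open_lhp anQ by (auto simp: analytic_on_open[symmetric] Fm_def an_V intro!: analytic_intros)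
  then have "(\<lambda>z. phin z n $ a $ b) holomorphic_on lower_half_plane"
    by (rule holomorphic_transform) (simp add: eq)
  then show ?thesis using open_lhp by (simp add: analytic_on_open)
qed


lemma cc_lower:
  assumes z0: "Im z0 < 0" and zK: "z \<in> cball z0 (- Im z0 / 2)"
  shows "Im z < 0" "cc z \<ge> 1 + (- Im z0 / 2) / (1 + (cmod z0 + (- Im z0 / 2))^2)"
proof -
  define r where "r = - Im z0 / 2"
  have r: "r > 0" using z0 by (simp add: r_def)
  have dz: "cmod (z - z0) \<le> r" using zK by (simp add: r_def dist_norm norm_minus_commute)
  have "\<bar>Im (z - z0)\<bar> \<le> cmod (z - z0)" by (rule abs_Im_le_cmod)
  with dz have imz: "Im z \<le> - r" by (simp add: r_def abs_le_iff)
  then show "Im z < 0" using r by simp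
  have "cmod z \<le> cmod z0 + cmod (z - z0)" by (metis add.commute diff_add_cancel norm_triangle_ineq)
  with dz have nz: "cmod z \<le> cmod z0 + r" by simp
  define D where "D = 1 + (cmod z0 + r)^2"
  have Dpos: "D > 0" unfolding D_def by (simp add: add_pos_nonneg)
  have "(cmod z)^2 \<le> (cmod z0 + r)^2" using nz by (intro power_mono) auto
  then have "1 + (cmod z)^2 \<le> D" by (simp add: D_def)
  then have qz: "q z \<ge> 1 / D" unfolding q_def
    by (intro divide_left_mono) (auto simp: add_pos_nonneg Dpos)
  have "2 * r \<le> - 2 * Im z" using imz by simp
  from mult_mono[OF this qz] r Dpos imz have "- 2 * Im z * q z \<ge> 2 * r * (1 / D)" by simp
  moreover have "2 * r * (1 / D) \<ge> r / D" using r Dpos by (simp add: divide_right_mono)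
  ultimately show "cc z \<ge> 1 + (- Im z0 / 2) / (1 + (cmod z0 + (- Im z0 / 2))^2)"
    by (simp add: cc_def D_def r_def)
qed

lemma phin_ucauchy:
  assumes z0: "Im z0 < 0"
  shows "uniformly_Cauchy_on (cball z0 (- Im z0 / 2)) (\<lambda>n z. phin z n $ a $ b)"
  unfolding uniformly_Cauchy_on_def
proof (intro allI impI)
  fix e :: real assume e: "e > 0"
  define c0 where "c0 = 1 + (- Im z0 / 2) / (1 + (cmod z0 + (- Im z0 / 2))^2)"
  have "(- Im z0 / 2) / (1 + (cmod z0 + (- Im z0 / 2))^2) > 0"
    using z0 by (intro divide_pos_pos) (auto simp: add_pos_nonneg)
  then have c0: "c0 > 1" unfolding c0_def by simp
  obtain N where N: "1 + 4 / e^2 < c0 ^ N" using real_arch_pow[OF c0] by blast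
  show "\<exists>M. \<forall>x\<in>cball z0 (- Im z0 / 2). \<forall>m\<ge>M. \<forall>n\<ge>M. dist (phin x m $ a $ b) (phin x n $ a $ b) < e"
  proof (intro exI ballI allI impI)
    fix z m n assume zK: "z \<in> cball z0 (- Im z0 / 2)" and m: "m \<ge> N" and n: "n \<ge> N"
    have zi: "Im z < 0" and ccz: "cc z \<ge> c0" using cc_lower[OF z0 zK] by (simp_all add: c0_def)
    define p where "p = min m n"
    have d1: "in_disc z p (phin z m)"
      using in_disc_mono[of z p m] phin_disc[of z m] zi by (simp add: p_def)
    have d2: "in_disc z p (phin z n)"
      using in_disc_mono[of z p n] phin_disc[of z n] zi by (simp add: p_def)
    have cl: "(cc z ^ p - 1) * (cmod (phin z m $ a $ b - phin z n $ a $ b))^2 \<le> 4"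
      by (rule disc_close_entry[OF zi d1 d2])
    have "c0 ^ N \<le> c0 ^ p" using c0 m n by (intro power_increasing) (auto simp: p_def)
    also have "\<dots> \<le> cc z ^ p" using c0 ccz by (intro power_mono) auto
    finally have X: "cc z ^ p - 1 > 4 / e^2" using N by simp
    have e2: "4 / e^2 > 0" using e by simp
    have "(cmod (phin z m $ a $ b - phin z n $ a $ b))^2 < e^2"
    proof (rule ccontr)
      assume "\<not> ?thesis"
      then have h: "(cmod (phin z m $ a $ b - phin z n $ a $ b))^2 \<ge> e^2" by simp
      have "(4 / e^2) * e^2 < (cc z ^ p - 1) * e^2" using X e by (intro mult_strict_right_mono) auto
      also have "\<dots> \<le> (cc z ^ p - 1) * (cmod (phin z m $ a $ b - phin z n $ a $ b))^2"
        using h X e2 by (intro mult_left_mono) linarith+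
      finally show False using cl e by simp
    qed
    then have "cmod (phin z m $ a $ b - phin z n $ a $ b) < e"
      using e by (simp add: power_less_imp_less_base)
    then show "dist (phin z m $ a $ b) (phin z n $ a $ b) < e" by (simp add: dist_norm)
  qed
qed

definition phi :: "complex \<Rightarrow> complex^'b^'a" where
  "phi z = (\<chi> a b. lim (\<lambda>n. phin z n $ a $ b))"

lemma phin_lim:
  assumes z: "z \<in> lower_half_plane"
  shows "(\<lambda>n. phin z n $ a $ b) \<longlonglongrightarrow> phi z $ a $ b"
proof -
  have zi: "Im z < 0" using z by (simp add: lower_half_plane_def)
  have zK: "z \<in> cball z (- Im z / 2)" using zi by simp
  have "Cauchy (\<lambda>n. phin z n $ a $ b)"
    using phin_ucauchy[OF zi, of a b] zK unfolding uniformly_Cauchy_on_def Cauchy_def by blast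
  then have "convergent (\<lambda>n. phin z n $ a $ b)" by (simp add: Cauchy_convergent_iff)
  then show ?thesis by (simp add: phi_def convergent_LIMSEQ_iff)
qed

lemma phi_analytic: "(\<lambda>z. phi z $ a $ b) analytic_on lower_half_plane"
  unfolding analytic_on_def
proof
  fix z0 assume z0L: "z0 \<in> lower_half_plane"
  then have z0: "Im z0 < 0" by (simp add: lower_half_plane_def)
  define r where "r = - Im z0 / 2"
  have r: "r > 0" using z0 by (simp add: r_def)
  have KL: "cball z0 r \<subseteq> lower_half_plane"
    using cc_lower(1)[OF z0] by (auto simp: r_def lower_half_plane_def)
  have "uniformly_convergent_on (cball z0 r) (\<lambda>n z. phin z n $ a $ b)"
    unfolding r_def by (intro Cauchy_uniformly_convergent phin_ucauchy z0)
  then obtain l where ul: "uniform_limit (cball z0 r) (\<lambda>n z. phin z n $ a $ b) l sequentially"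
    by (auto simp: uniformly_convergent_on_def)
  have "l z = phi z $ a $ b" if "z \<in> cball z0 r" for z
  proof -
    have "z \<in> lower_half_plane" using that KL by auto
    then show ?thesis using LIMSEQ_unique[OF tendsto_uniform_limitI[OF ul that] phin_lim] by blast
  qed
  then have ul2: "uniform_limit (cball z0 r) (\<lambda>n z. phin z n $ a $ b) (\<lambda>z. phi z $ a $ b) sequentially"
    using ul uniform_limit_cong'[of "cball z0 r" "\<lambda>n z. phin z n $ a $ b" "\<lambda>n z. phin z n $ a $ b" l "\<lambda>z. phi z $ a $ b"]
    by simp
  have "eventually (\<lambda>n. continuous_on (cball z0 r) (\<lambda>z. phin z n $ a $ b) \<and> (\<lambda>z. phin z n $ a $ b) holomorphic_on ball z0 r) sequentially"
  proof (rule always_eventually, intro allI conjI)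
    fix n
    have h: "(\<lambda>z. phin z n $ a $ b) holomorphic_on cball z0 r"
      using an_phin KL analytic_on_subset analytic_imp_holomorphic by blast
    then show "continuous_on (cball z0 r) (\<lambda>z. phin z n $ a $ b)"
      by (rule holomorphic_on_imp_continuous_on)
    show "(\<lambda>z. phin z n $ a $ b) holomorphic_on ball z0 r"
      using h by (rule holomorphic_on_subset) auto
  qed
  then obtain "(\<lambda>z. phi z $ a $ b) holomorphic_on ball z0 r"
    using holomorphic_uniform_limit[OF _ ul2] by auto
  then show "\<exists>e>0. (\<lambda>z. phi z $ a $ b) holomorphic_on ball z0 e" using r by blast
qed


lemma tendsto_mv:
  fixes A :: "complex^'n^'m"
  assumes "y \<longlonglongrightarrow> l"
  shows "(\<lambda>n. A *v y n) \<longlonglongrightarrow> A *v l"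
proof (rule vec_tendstoI)
  fix i
  show "(\<lambda>n. (A *v y n) $ i) \<longlonglongrightarrow> (A *v l) $ i"
    unfolding matrix_vector_mult_def vec_lambda_beta
    by (intro tendsto_intros tendsto_vec_nth assms)
qed

lemma tendsto_Jf:
  assumes "y \<longlonglongrightarrow> l"
  shows "(\<lambda>n. Jf (y n)) \<longlonglongrightarrow> Jf l"
  unfolding Jf_formula by (intro tendsto_intros tendsto_vec_nth assms)

lemma stack_tendsto:
  assumes z: "z \<in> lower_half_plane"
  shows "(\<lambda>n. stack_id (phin z n) *v v) \<longlonglongrightarrow> stack_id (phi z) *v v"
proof (rule vec_tendstoI)
  fix i :: "'a+'b"
  show "(\<lambda>n. (stack_id (phin z n) *v v) $ i) \<longlonglongrightarrow> (stack_id (phi z) *v v) $ i"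
  proof (cases i)
    case (Inl a)
    show ?thesis unfolding Inl stack_vec_Inl
      unfolding matrix_vector_mult_def vec_lambda_beta by (intro tendsto_intros phin_lim z)
  next
    case (Inr b)
    show ?thesis unfolding Inr stack_vec_Inr by simp
  qed
qed

lemma phi_disc:
  assumes z: "z \<in> lower_half_plane"
  shows "in_disc z k (phi z)"
  unfolding in_disc_def
proof
  fix v
  have zi: "Im z \<le> 0" using z by (simp add: lower_half_plane_def)
  have "(\<lambda>n. fJ z k (stack_id (phin z n) *v v)) \<longlonglongrightarrow> fJ z k (stack_id (phi z) *v v)"
    unfolding fJ_def by (intro tendsto_mult_left tendsto_Jf tendsto_mv stack_tendsto z)
  moreover have "\<exists>N. \<forall>n\<ge>N. fJ z k (stack_id (phin z n) *v v) \<le> 0"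
    using in_disc_mono[OF zi _ phin_disc[OF zi]] by (auto simp: in_disc_def)
  ultimately show "fJ z k (stack_id (phi z) *v v) \<le> 0" by (rule LIMSEQ_le_const2)
qed

lemma polar_entry:
  fixes M :: "complex^'n^'n"
  shows "M $ i $ j = (qform M (axis i 1 + axis j 1) - qform M (axis i 1 - axis j 1)) / 4
     - \<i> * (qform M (axis i 1 + \<i> *s axis j 1) - qform M (axis i 1 - \<i> *s axis j 1)) / 4"
proof -
  have B: "cinner x (M *v y) = (qform M (x + y) - qform M (x - y)) / 4
     - \<i> * (qform M (x + \<i> *s y) - qform M (x - \<i> *s y)) / 4" for x y :: "complex^'n"
    by (simp add: qform_cinner matrix_vector_right_distrib matrix_vector_mult_diff_distrib
        vector_scalar_commute cinner_add_left cinner_add_right cinner_diff_left cinner_diff_right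
        cinner_scale_left cinner_scale_right algebra_simps) (simp add: field_simps)
  have "cinner (axis i 1) (M *v axis j 1) = M $ i $ j"
  proof -
    have "cinner (axis i 1) (M *v axis j 1) = (\<Sum>c\<in>UNIV. if c = i then (M *v axis j 1) $ i else 0)"
      unfolding cinner_def axis_def by (rule sum.cong) auto
    then show ?thesis by (simp add: mv_axis)
  qed
  with B[of "axis i 1" "axis j 1"] show ?thesis by simp
qed

lemma summable_entries:
  fixes f :: "nat \<Rightarrow> complex^'n^'m"
  assumes "\<And>i j. summable (\<lambda>k. f k $ i $ j)"
  shows "summable f"
proof -
  have "(\<lambda>n. \<Sum>k<n. f k) \<longlonglongrightarrow> (\<chi> i j. suminf (\<lambda>k. f k $ i $ j))"
  proof (rule vec_tendstoI)
    fix i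
    show "(\<lambda>n. (\<Sum>k<n. f k) $ i) \<longlonglongrightarrow> (\<chi> i j. suminf (\<lambda>k. f k $ i $ j)) $ i"
    proof (rule vec_tendstoI)
      fix j
      show "(\<lambda>n. (\<Sum>k<n. f k) $ i $ j) \<longlonglongrightarrow> (\<chi> i j. suminf (\<lambda>k. f k $ i $ j)) $ i $ j"
        using summable_LIMSEQ[OF assms[of i j]] by simp
    qed
  qed
  then show ?thesis unfolding summable_def sums_def by blast
qed

lemma phi_weyl: "is_weyl C phi"
  unfolding is_weyl_def
proof
  fix z assume z: "z \<in> lower_half_plane"
  have zi: "Im z < 0" using z by (simp add: lower_half_plane_def)
  define g where "g = - 2 * Im z * q z"
  have gpos: "g > 0" unfolding g_def using zi q_pos[of z] by (simp add: mult_neg_pos)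
  have sv: "summable (\<lambda>k. sC z k (stack_id (phi z) *v v))" for v
  proof (rule summableI_nonneg_bounded)
    show "\<And>n. 0 \<le> sC z n (stack_id (phi z) *v v)" by (rule sC_nonneg)
    fix n
    have "g * (\<Sum>k<n. sC z k (stack_id (phi z) *v v)) \<le> nsq v"
      unfolding g_def by (rule disc_sum_bound[OF zi phi_disc[OF z]])
    then show "(\<Sum>k<n. sC z k (stack_id (phi z) *v v)) \<le> nsq v / g"
      using gpos by (simp add: pos_le_divide_eq mult.commute)
  qed
  have qv: "summable (\<lambda>k. qform (Tm z (stack_id (phi z)) k) v)" for v
    using sv[of v] by (simp add: qform_Tm)
  have "summable (\<lambda>k. Tm z (stack_id (phi z)) k)"
  proof (rule summable_entries)
    fix i j
    show "summable (\<lambda>k. Tm z (stack_id (phi z)) k $ i $ j)"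
      by (subst polar_entry) (intro summable_diff summable_divide summable_mult qv)
  qed
  then show "summable (\<lambda>k. q z ^ k *\<^sub>R (adj (stack_id (phi z)) ** adj (W C z k) ** C k ** W C z k ** stack_id (phi z)))"
    by (simp add: Tm_def)
qed

end

theorem theorem2p2:
  fixes C :: "nat \<Rightarrow> complex ^ ('a::finite + 'b::finite) ^ ('a + 'b)"
  assumes "\<forall>k. pos_def (C k)"
    and "\<forall>k. C k ** jmat ** C k = jmat"
  shows "\<exists>\<phi> :: complex \<Rightarrow> complex ^ 'b ^ 'a.
           is_weyl C \<phi>
         \<and> (\<forall>\<psi>. is_weyl C \<psi> \<longrightarrow> (\<forall>z \<in> lower_half_plane. \<psi> z = \<phi> z))
         \<and> (\<forall>i j. (\<lambda>z. \<phi> z $ i $ j) analytic_on lower_half_plane)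
         \<and> (\<forall>z \<in> lower_half_plane. loewner_le (adj (\<phi> z) ** \<phi> z) (mat 1))"
proof -
  interpret dirac C using assms by unfold_locales auto
  show ?thesis
  proof (intro exI conjI allI impI ballI)
    show "is_weyl C phi" by (rule phi_weyl)
    show "\<psi> z = phi z" if "is_weyl C \<psi>" "z \<in> lower_half_plane" for \<psi> z
      by (rule weyl_unique[OF phi_weyl that])
    show "(\<lambda>z. phi z $ i $ j) analytic_on lower_half_plane" for i j by (rule phi_analytic)
    show "loewner_le (adj (phi z) ** phi z) (mat 1)" if "z \<in> lower_half_plane" for z
      by (rule weyl_contractive[OF phi_weyl that])
  qed
qed

end
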